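(* Fix $p\in(0,1)$ and $\epsilon>0$. For each $n$, let the communication graph be a single directed Erdős–Rényi random graph $G(n,p)$ on $n$ nodes, used in every round (i.e. $G_t=G_1$ for all $t$). For an algorithm $R'$, let $T^{\rm all}_n(R')$ be the number of rounds until every node has received every node's packet when all nodes run $R'$. Then $$\lim_{n\to\infty}\mathbb P\Bigl(T^{\rm all}_n(R1)>\tfrac{2(1+\epsilon)}{p}\log n\Bigr)=0,\qquad \lim_{n\to\infty}\mathbb P\Bigl(T^{\rm all}_n(R2)>\tfrac{2(1+\epsilon)}{p^2}\log n\Bigr)=0,$$ where probabilities are over the randomness of both the graph and the algorithm.
   Context: A directed Erdős–Rényi random graph $G(n,p)$ has each ordered pair $(u,v)$, $u\ne v$, present independently with probability $p$; a broadcast by $u$ in any round is received by exactly the nodes $v$ with $(u,v)$ an edge. Each node initially holds one distinct packet and broadcasts exactly one packet per round. Algorithms R1 and R2: in round 1 each node broadcasts its own packet. Each node stores all packets received. In each round $t\ge2$, each node broadcasts a packet chosen uniformly at random from (R1) the set of packets it received in round 1, or (R2) the set of all packets it received in rounds $1,\ldots,t-1$. All these random choices are mutually independent across nodes and rounds (and independent of the graph given the received sets). *)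

theory Defs
  imports "HOL-Probability.Probability"
begin

text \<open>Nodes are 0,...,n-1; node u initially holds packet u.
  A graph is an edge indicator g :: nat \<times> nat \<Rightarrow> bool; (u,v) is an edge iff g (u,v).\<close>

definition er_graph :: "nat \<Rightarrow> real \<Rightarrow> (nat \<times> nat \<Rightarrow> bool) pmf" where
  "er_graph n p = Pi_pmf {(u,v). u < n \<and> v < n \<and> u \<noteq> v} False (\<lambda>_. bernoulli_pmf p)"

datatype algo = R1 | R2

text \<open>Packets received by v in round 1 (everybody broadcasts its own packet).\<close>
definition round1_recv :: "nat \<Rightarrow> (nat \<times> nat \<Rightarrow> bool) \<Rightarrow> nat \<Rightarrow> nat set" where
  "round1_recv n g v = {u. u < n \<and> g (u, v)}"

text \<open>Set from which node u picks its broadcast packet in a round t \<ge> 2,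
  given r = packets received in rounds 1..t-1.\<close>
definition choice_set :: "algo \<Rightarrow> nat \<Rightarrow> (nat \<times> nat \<Rightarrow> bool) \<Rightarrow> (nat \<Rightarrow> nat set) \<Rightarrow> nat \<Rightarrow> nat set" where
  "choice_set a n g r u = (case a of R1 \<Rightarrow> round1_recv n g u | R2 \<Rightarrow> r u)"

definition broadcast_pmf :: "algo \<Rightarrow> nat \<Rightarrow> (nat \<times> nat \<Rightarrow> bool) \<Rightarrow> (nat \<Rightarrow> nat set) \<Rightarrow> (nat \<Rightarrow> nat) pmf" where
  "broadcast_pmf a n g r = Pi_pmf {..<n} 0
     (\<lambda>u. if choice_set a n g r u = {} then return_pmf u else pmf_of_set (choice_set a n g r u))"

text \<open>History [s_0, ..., s_k] where s_t v = set of packets received by v in rounds 1..t.\<close>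
fun history :: "algo \<Rightarrow> nat \<Rightarrow> (nat \<times> nat \<Rightarrow> bool) \<Rightarrow> nat \<Rightarrow> (nat \<Rightarrow> nat set) list pmf" where
  "history a n g 0 = return_pmf [(\<lambda>_. {})]"
| "history a n g (Suc 0) = return_pmf [(\<lambda>_. {}), round1_recv n g]"
| "history a n g (Suc (Suc k)) =
     bind_pmf (history a n g (Suc k)) (\<lambda>h.
     bind_pmf (broadcast_pmf a n g (last h)) (\<lambda>b.
     return_pmf (h @ [(\<lambda>v. last h v \<union> {b u | u. u < n \<and> g (u, v)})])))"

text \<open>Every node has every node's packet (its own packet it holds from the start).\<close>
definition all_done :: "nat \<Rightarrow> (nat \<Rightarrow> nat set) \<Rightarrow> bool" where
  "all_done n s \<longleftrightarrow> (\<forall>v<n. \<forall>u<n. u = v \<or> u \<in> s v)"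

definition prob_T_gt :: "algo \<Rightarrow> nat \<Rightarrow> real \<Rightarrow> real \<Rightarrow> real" where
  "prob_T_gt a n p x = measure_pmf.prob
     (bind_pmf (er_graph n p) (\<lambda>g. history a n g (nat \<lfloor>x\<rfloor>)))
     {h. \<not> (\<exists>k. real k \<le> x \<and> k < length h \<and> all_done n (h ! k))}"

end

theory Submission
  imports Defs
begin


lemma expectation_pair_prod:
  fixes \<phi> :: "'a \<Rightarrow> real" and \<psi> :: "'b \<Rightarrow> real"
  assumes "finite (set_pmf M)" "finite (set_pmf N)"
  shows "measure_pmf.expectation (pair_pmf M N) (\<lambda>z. \<phi> (fst z) * \<psi> (snd z)) =
         measure_pmf.expectation M \<phi> * measure_pmf.expectation N \<psi>"
proof -
  have "measure_pmf.expectation (pair_pmf M N) (\<lambda>z. \<phi> (fst z) * \<psi> (snd z)) =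
        (\<Sum>z\<in>set_pmf M \<times> set_pmf N. pmf (pair_pmf M N) z *\<^sub>R (\<phi> (fst z) * \<psi> (snd z)))"
    using assms by (intro integral_measure_pmf) auto
  also have "\<dots> = (\<Sum>a\<in>set_pmf M. \<Sum>b\<in>set_pmf N. (pmf M a * \<phi> a) * (pmf N b * \<psi> b))"
    by (subst sum.cartesian_product) (auto simp: pmf_pair intro!: sum.cong)
  also have "\<dots> = (\<Sum>a\<in>set_pmf M. pmf M a * \<phi> a) * (\<Sum>b\<in>set_pmf N. pmf N b * \<psi> b)"
    by (simp add: sum_product)
  also have "(\<Sum>a\<in>set_pmf M. pmf M a * \<phi> a) = measure_pmf.expectation M \<phi>"
    using assms by (subst integral_measure_pmf[of "set_pmf M"]) auto
  also have "(\<Sum>b\<in>set_pmf N. pmf N b * \<psi> b) = measure_pmf.expectation N \<psi>"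
    using assms by (subst integral_measure_pmf[of "set_pmf N"]) auto
  finally show ?thesis .
qed

lemma Pi_pmf_supp:
  assumes "finite A"  "f \<in> set_pmf (Pi_pmf A d p)" "x \<notin> A"
  shows "f x = d" using subsetD[OF set_Pi_pmf_subset[OF assms(1)] assms(2)] assms(3) by simp

lemma finite_set_Pi_pmf:
  assumes "finite A" "\<And>x. finite (set_pmf (p x))"
  shows "finite (set_pmf (Pi_pmf A d p))"
  using assms by (subst set_Pi_pmf) (auto)

lemma Pi_pmf_restrict_expect:
  fixes \<phi> :: "('a \<Rightarrow> 'b) \<Rightarrow> real"
  assumes "finite A" "A' \<subseteq> A"
    and dep: "\<And>g g'. (\<forall>e\<in>S. g e = g' e) \<Longrightarrow> \<phi> g = \<phi> g'"
    and "A \<inter> S \<subseteq> A'"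
  shows "measure_pmf.expectation (Pi_pmf A' d p) \<phi> = measure_pmf.expectation (Pi_pmf A d p) \<phi>"
proof -
  have "measure_pmf.expectation (Pi_pmf A' d p) \<phi> =
     measure_pmf.expectation (Pi_pmf A d p) (\<lambda>f. \<phi> (\<lambda>x. if x \<in> A' then f x else d))"
    by (subst Pi_pmf_subset[OF assms(1,2)], rule integral_map_pmf)
  also have "\<dots> = measure_pmf.expectation (Pi_pmf A d p) \<phi>"
  proof (rule integral_cong_AE)
    show "AE f in Pi_pmf A d p. \<phi> (\<lambda>x. if x \<in> A' then f x else d) = \<phi> f"
    proof (rule AE_pmfI)
      fix f assume ff: "f \<in> set_pmf (Pi_pmf A d p)"
      have f: "\<And>x. x \<notin> A \<Longrightarrow> f x = d" using Pi_pmf_supp[OF assms(1) ff] by simp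
      show "\<phi> (\<lambda>x. if x \<in> A' then f x else d) = \<phi> f"
        by (rule dep) (use f assms(4) in auto)
    qed
  qed simp_all
  finally show ?thesis .
qed

lemma Pi_pmf_factor2:
  fixes \<phi> \<psi> :: "('a \<Rightarrow> 'b) \<Rightarrow> real"
  assumes fin: "finite A" "\<And>x. finite (set_pmf (p x))"
    and dep1: "\<And>g g'. (\<forall>e\<in>S. g e = g' e) \<Longrightarrow> \<phi> g = \<phi> g'"
    and dep2: "\<And>g g'. (\<forall>e\<in>-S. g e = g' e) \<Longrightarrow> \<psi> g = \<psi> g'"
  shows "measure_pmf.expectation (Pi_pmf A d p) (\<lambda>g. \<phi> g * \<psi> g) =
         measure_pmf.expectation (Pi_pmf A d p) \<phi> * measure_pmf.expectation (Pi_pmf A d p) \<psi>"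
proof -
  define A1 where "A1 = A \<inter> S"
  define A2 where "A2 = A - S"
  have A: "A = A1 \<union> A2" "A1 \<inter> A2 = {}" "finite A1" "finite A2"
    using fin(1) by (auto simp: A1_def A2_def)
  let ?P1 = "Pi_pmf A1 d p" and ?P2 = "Pi_pmf A2 d p"
  have "measure_pmf.expectation (Pi_pmf A d p) (\<lambda>g. \<phi> g * \<psi> g) =
        measure_pmf.expectation (pair_pmf ?P1 ?P2)
          (\<lambda>z. \<phi> ((\<lambda>(f,g) x. if x \<in> A1 then f x else g x) z) * \<psi> ((\<lambda>(f,g) x. if x \<in> A1 then f x else g x) z))"
    by (subst A(1), subst Pi_pmf_union[OF A(3,4,2)]) simp
  also have "\<dots> = measure_pmf.expectation (pair_pmf ?P1 ?P2) (\<lambda>z. \<phi> (fst z) * \<psi> (snd z))"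
  proof (intro integral_cong_AE AE_pmfI)
    fix z assume "z \<in> set_pmf (pair_pmf ?P1 ?P2)"
    then obtain f g where z: "z = (f,g)" "f \<in> set_pmf ?P1" "g \<in> set_pmf ?P2" by auto
    have f: "\<And>x. x \<notin> A1 \<Longrightarrow> f x = d" using Pi_pmf_supp[OF A(3) z(2)] by blast
    have g: "\<And>x. x \<notin> A2 \<Longrightarrow> g x = d" using Pi_pmf_supp[OF A(4) z(3)] by blast
    have "\<phi> (\<lambda>x. if x \<in> A1 then f x else g x) = \<phi> f"
      by (rule dep1) (use f g in \<open>auto simp: A2_def\<close>)
    moreover have "\<psi> (\<lambda>x. if x \<in> A1 then f x else g x) = \<psi> g"
      by (rule dep2) (auto simp: A1_def)
    ultimately show "\<phi> ((\<lambda>(f,g) x. if x \<in> A1 then f x else g x) z) * \<psi> ((\<lambda>(f,g) x. if x \<in> A1 then f x else g x) z) =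
       \<phi> (fst z) * \<psi> (snd z)" by (simp add: z)
  qed simp_all
  also have "\<dots> = measure_pmf.expectation ?P1 \<phi> * measure_pmf.expectation ?P2 \<psi>"
    by (rule expectation_pair_prod) (use A fin in \<open>auto intro!: finite_set_Pi_pmf\<close>)
  also have "measure_pmf.expectation ?P1 \<phi> = measure_pmf.expectation (Pi_pmf A d p) \<phi>"
    by (rule Pi_pmf_restrict_expect[OF fin(1) _ dep1]) (auto simp: A1_def)
  also have "measure_pmf.expectation ?P2 \<psi> = measure_pmf.expectation (Pi_pmf A d p) \<psi>"
    by (rule Pi_pmf_restrict_expect[OF fin(1) _ dep2]) (auto simp: A2_def)
  finally show ?thesis .
qed

lemma Pi_pmf_factor:
  fixes \<phi> :: "'u \<Rightarrow> ('a \<Rightarrow> 'b) \<Rightarrow> real"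
  assumes fin: "finite A" "\<And>x. finite (set_pmf (p x))" and U: "finite U"
    and disj: "disjoint_family_on S U"
    and dep: "\<And>u g g'. u \<in> U \<Longrightarrow> (\<forall>e\<in>S u. g e = g' e) \<Longrightarrow> \<phi> u g = \<phi> u g'"
  shows "measure_pmf.expectation (Pi_pmf A d p) (\<lambda>g. \<Prod>u\<in>U. \<phi> u g) =
         (\<Prod>u\<in>U. measure_pmf.expectation (Pi_pmf A d p) (\<phi> u))"
  using U disj dep
proof (induction U rule: finite_induct)
  case empty
  then show ?case by simp
next
  case (insert u0 U)
  have IH: "measure_pmf.expectation (Pi_pmf A d p) (\<lambda>g. \<Prod>u\<in>U. \<phi> u g) =
         (\<Prod>u\<in>U. measure_pmf.expectation (Pi_pmf A d p) (\<phi> u))"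
    using insert.prems by (intro insert.IH) (auto simp: disjoint_family_on_def)
  have "measure_pmf.expectation (Pi_pmf A d p) (\<lambda>g. \<Prod>u\<in>insert u0 U. \<phi> u g) =
        measure_pmf.expectation (Pi_pmf A d p) (\<lambda>g. \<phi> u0 g * (\<Prod>u\<in>U. \<phi> u g))"
    using insert.hyps by simp
  also have "\<dots> = measure_pmf.expectation (Pi_pmf A d p) (\<phi> u0) *
       measure_pmf.expectation (Pi_pmf A d p) (\<lambda>g. \<Prod>u\<in>U. \<phi> u g)"
  proof (rule Pi_pmf_factor2[OF fin, of "S u0"])
    show "\<phi> u0 g = \<phi> u0 g'" if "\<forall>e\<in>S u0. g e = g' e" for g g'
      using insert.prems(2)[of u0 g g'] that by simp
    show "(\<Prod>u\<in>U. \<phi> u g) = (\<Prod>u\<in>U. \<phi> u g')" if "\<forall>e\<in>-S u0. g e = g' e" for g g'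
    proof (intro prod.cong refl)
      fix u assume u: "u \<in> U"
      have "S u \<inter> S u0 = {}" using insert.prems(1) insert.hyps u
        unfolding disjoint_family_on_def by fastforce
      then show "\<phi> u g = \<phi> u g'" using insert.prems(2)[of u g g'] that u by auto
    qed
  qed
  finally show ?case using IH insert.hyps by simp
qed


lemma measure_bind_pmf_real:
  "measure_pmf.prob (bind_pmf M f) A = measure_pmf.expectation M (\<lambda>x. measure_pmf.prob (f x) A)"
proof -
  have int: "integrable (measure_pmf M) (\<lambda>x. measure_pmf.prob (f x) A)"
    by (intro measure_pmf.integrable_const_bound[of _ 1]) auto
  have "ennreal (measure_pmf.prob (bind_pmf M f) A) = emeasure (measure_pmf (bind_pmf M f)) A"
    by (simp add: measure_pmf.emeasure_eq_measure)
  also have "\<dots> = (\<integral>\<^sup>+x. emeasure (measure_pmf (f x)) A \<partial>M)" by simp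
  also have "\<dots> = (\<integral>\<^sup>+x. ennreal (measure_pmf.prob (f x) A) \<partial>M)"
    by (simp add: measure_pmf.emeasure_eq_measure)
  also have "\<dots> = ennreal (measure_pmf.expectation M (\<lambda>x. measure_pmf.prob (f x) A))"
    by (rule nn_integral_eq_integral[OF int]) auto
  finally show ?thesis
    by (subst (asm) ennreal_inj) (auto intro!: Bochner_Integration.integral_nonneg)
qed

lemma bind_prob_le:
  assumes "c \<ge> 0" "\<And>x. x \<in> set_pmf M \<Longrightarrow> measure_pmf.prob (f x) A \<le> c * indicator B x"
  shows "measure_pmf.prob (bind_pmf M f) A \<le> c * measure_pmf.prob M B"
proof -
  have "measure_pmf.prob (bind_pmf M f) A = measure_pmf.expectation M (\<lambda>x. measure_pmf.prob (f x) A)"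
    by (rule measure_bind_pmf_real)
  also have "\<dots> \<le> measure_pmf.expectation M (\<lambda>x. c * indicator B x)"
    by (intro integral_mono_AE AE_pmfI assms measure_pmf.integrable_const_bound[of _ 1]
              measure_pmf.integrable_const_bound[of _ c])
       (use assms(1) in \<open>auto simp: indicator_def\<close>)
  also have "\<dots> = c * measure_pmf.prob M B" by simp
  finally show ?thesis .
qed

definition Uset :: "nat \<Rightarrow> nat \<Rightarrow> nat \<Rightarrow> nat set" where
  "Uset n w v = {u. u < n \<and> u \<noteq> w \<and> u \<noteq> v}"

definition cu :: "algo \<Rightarrow> nat \<Rightarrow> (nat \<times> nat \<Rightarrow> bool) \<Rightarrow> nat \<Rightarrow> real" where
  "cu a n g u = (case a of R1 \<Rightarrow> real (card (round1_recv n g u)) | R2 \<Rightarrow> real n)"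

definition fr :: "algo \<Rightarrow> nat \<Rightarrow> (nat \<times> nat \<Rightarrow> bool) \<Rightarrow> nat \<Rightarrow> nat \<Rightarrow> nat \<Rightarrow> real" where
  "fr a n g w v u = (if g (w,u) \<and> g (u,v) then 1 - 1 / cu a n g u else 1)"

definition qq :: "algo \<Rightarrow> nat \<Rightarrow> (nat \<times> nat \<Rightarrow> bool) \<Rightarrow> nat \<Rightarrow> nat \<Rightarrow> real" where
  "qq a n g w v = (\<Prod>u\<in>Uset n w v. fr a n g w v u)"

definition hinv :: "nat \<Rightarrow> (nat \<times> nat \<Rightarrow> bool) \<Rightarrow> (nat \<Rightarrow> nat set) \<Rightarrow> bool" where
  "hinv n g s \<longleftrightarrow> (\<forall>u<n. round1_recv n g u \<subseteq> s u \<and> s u \<subseteq> {..<n})"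

lemma finite_Uset[simp]: "finite (Uset n w v)" by (auto simp: Uset_def)

lemma round1_sub: "round1_recv n g u \<subseteq> {..<n}" by (auto simp: round1_recv_def)

lemma choice_sub:
  assumes "hinv n g s" "u < n"
  shows "choice_set a n g s u \<subseteq> {..<n}"
  using assms round1_sub by (cases a) (auto simp: choice_set_def hinv_def)

lemma broadcast_set:
  assumes "hinv n g s" "b \<in> set_pmf (broadcast_pmf a n g s)" "u < n"
  shows "b u < n"
proof -
  let ?F = "\<lambda>u. if choice_set a n g s u = {} then return_pmf u else pmf_of_set (choice_set a n g s u)"
  have "b \<in> PiE_dflt {..<n} 0 (set_pmf \<circ> ?F)"
    using assms(2) unfolding broadcast_pmf_def by (subst (asm) set_Pi_pmf) auto
  then have bu: "b u \<in> set_pmf (?F u)" using assms(3) by (auto simp: PiE_dflt_def)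
  have fin: "finite (choice_set a n g s u)"
    using choice_sub[OF assms(1,3)] finite_subset by blast
  show ?thesis
  proof (cases "choice_set a n g s u = {}")
    case True then show ?thesis using bu assms(3) by simp
  next
    case False
    then have "b u \<in> choice_set a n g s u" using bu fin by simp
    then show ?thesis using choice_sub[OF assms(1,3)] by auto
  qed
qed

lemma history_set:
  "h \<in> set_pmf (history a n g (Suc k)) \<Longrightarrow> length h = k + 2 \<and> hinv n g (last h)"
proof (induction k arbitrary: h)
  case 0
  then show ?case by (auto simp: hinv_def round1_sub)
next
  case (Suc k)
  from Suc.prems obtain h0 b where h0: "h0 \<in> set_pmf (history a n g (Suc k))"
    and b: "b \<in> set_pmf (broadcast_pmf a n g (last h0))"
    and h: "h = h0 @ [(\<lambda>v. last h0 v \<union> {b u | u. u < n \<and> g (u, v)})]"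
    by auto
  have IH: "length h0 = k + 2" "hinv n g (last h0)" using Suc.IH[OF h0] by auto
  have "hinv n g (\<lambda>v. last h0 v \<union> {b u | u. u < n \<and> g (u, v)})"
    using IH(2) broadcast_set[OF IH(2) b] unfolding hinv_def by auto
  then show ?case using IH h by simp
qed


lemma prob_not_w:
  assumes "finite C" "w \<in> C"
  shows "measure_pmf.prob (pmf_of_set C) (-{w}) = 1 - 1 / real (card C)"
proof -
  have ne: "C \<noteq> {}" using assms by auto
  have c: "card C \<ge> 1" using assms card_gt_0_iff by (metis One_nat_def Suc_leI empty_iff)
  have "card (C \<inter> -{w}) = card C - 1" using assms
    by (metis Diff_eq card_Diff_singleton)
  then show ?thesis using measure_pmf_of_set[OF ne assms(1)] c
    by (simp add: of_nat_diff field_simps)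
qed

lemma step_bound:
  assumes inv: "hinv n g s" and wv: "w < n" "v < n" "w \<noteq> v"
  shows "measure_pmf.prob (broadcast_pmf a n g s)
           {b. w \<notin> s v \<union> {b u | u. u < n \<and> g (u, v)}} \<le> qq a n g w v"
proof -
  define P where "P = (\<lambda>u. u \<in> Uset n w v \<and> g (w,u) \<and> g (u,v))"
  define B where "B = (\<lambda>u. if P u then -{w} else (UNIV :: nat set))"
  let ?F = "\<lambda>u. if choice_set a n g s u = {} then return_pmf u else pmf_of_set (choice_set a n g s u)"
  have sub: "{b. w \<notin> s v \<union> {b u | u. u < n \<and> g (u, v)}} \<subseteq> Pi {..<n} B"
    by (auto simp: B_def P_def Uset_def)
  have "measure_pmf.prob (broadcast_pmf a n g s) {b. w \<notin> s v \<union> {b u | u. u < n \<and> g (u, v)}}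
        \<le> measure_pmf.prob (broadcast_pmf a n g s) (Pi {..<n} B)"
    by (rule measure_pmf.finite_measure_mono[OF sub]) simp
  also have "\<dots> = (\<Prod>u\<in>{..<n}. measure_pmf.prob (?F u) (B u))"
    unfolding broadcast_pmf_def by (rule measure_Pi_pmf_Pi) simp
  also have "\<dots> \<le> (\<Prod>u\<in>{..<n}. if P u then fr a n g w v u else 1)"
  proof (intro prod_mono conjI)
    fix u assume u: "u \<in> {..<n}"
    show "0 \<le> measure_pmf.prob (?F u) (B u)" by simp
    show "measure_pmf.prob (?F u) (B u) \<le> (if P u then fr a n g w v u else 1)"
    proof (cases "P u")
      case False then show ?thesis by (simp add: B_def)
    next
      case True
      have wC: "w \<in> choice_set a n g s u"
        using True inv u wv by (cases a) (auto simp: P_def choice_set_def round1_recv_def hinv_def)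
      have finC: "finite (choice_set a n g s u)"
        using choice_sub[OF inv] u finite_subset by blast
      have pr: "measure_pmf.prob (?F u) (B u) = 1 - 1 / real (card (choice_set a n g s u))"
        using wC finC True by (auto simp: B_def prob_not_w)
      have cpos: "card (choice_set a n g s u) > 0" using wC finC card_gt_0_iff by blast
      have "1 - 1 / real (card (choice_set a n g s u)) \<le> 1 - 1 / cu a n g u"
      proof (cases a)
        case R1 then show ?thesis by (simp add: choice_set_def cu_def)
      next
        case R2
        have "card (choice_set a n g s u) \<le> card {..<n}"
          using choice_sub[OF inv] u by (intro card_mono) auto
        then have "real (card (choice_set a n g s u)) \<le> real n" by simp
        then show ?thesis using cpos R2 by (simp add: cu_def frac_le)
      qed
      then show ?thesis using pr True by (simp add: fr_def P_def)
    qed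
  qed
  also have "\<dots> = qq a n g w v"
  proof -
    have "(\<Prod>u\<in>{..<n}. if P u then fr a n g w v u else 1) = (\<Prod>u\<in>{..<n} \<inter> {u. P u}. fr a n g w v u)"
      by (subst prod.If_cases) auto
    also have "\<dots> = (\<Prod>u\<in>Uset n w v. fr a n g w v u)"
      by (rule prod.mono_neutral_left) (auto simp: P_def Uset_def fr_def)
    finally show ?thesis by (simp add: qq_def)
  qed
  finally show ?thesis .
qed


lemma fr_nonneg: "0 \<le> fr a n g w v u"
  by (cases a) (auto simp: fr_def cu_def divide_le_eq)

lemma fr_le1: "fr a n g w v u \<le> 1"
  by (cases a) (auto simp: fr_def cu_def)

lemma qq_nonneg: "0 \<le> qq a n g w v"
  unfolding qq_def by (intro prod_nonneg) (simp add: fr_nonneg)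

lemma hist_bound:
  assumes wv: "w < n" "v < n" "w \<noteq> v"
  shows "measure_pmf.prob (history a n g (Suc k)) {h. w \<notin> last h v} \<le> (qq a n g w v) ^ k"
proof (induction k)
  case 0
  then show ?case by simp
next
  case (Suc k)
  have "measure_pmf.prob (history a n g (Suc (Suc k))) {h. w \<notin> last h v}
        \<le> qq a n g w v * measure_pmf.prob (history a n g (Suc k)) {h. w \<notin> last h v}"
    unfolding history.simps
  proof (rule bind_prob_le[OF qq_nonneg])
    fix h assume h: "h \<in> set_pmf (history a n g (Suc k))"
    have inv: "hinv n g (last h)" using history_set[OF h] by simp
    have eq: "measure_pmf.prob (bind_pmf (broadcast_pmf a n g (last h))
       (\<lambda>b. return_pmf (h @ [\<lambda>v. last h v \<union> {b u |u. u < n \<and> g (u, v)}]))) {h. w \<notin> last h v}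
      = measure_pmf.prob (broadcast_pmf a n g (last h)) {b. w \<notin> last h v \<union> {b u |u. u < n \<and> g (u, v)}}"
      by (simp add: map_pmf_def[symmetric] vimage_def)
    show "measure_pmf.prob (bind_pmf (broadcast_pmf a n g (last h))
       (\<lambda>b. return_pmf (h @ [\<lambda>v. last h v \<union> {b u |u. u < n \<and> g (u, v)}]))) {h. w \<notin> last h v}
      \<le> qq a n g w v * indicator {h. w \<notin> last h v} h"
    proof (cases "w \<in> last h v")
      case True
      then show ?thesis unfolding eq by simp
    next
      case False
      then show ?thesis unfolding eq using step_bound[OF inv wv] by simp
    qed
  qed
  also have "\<dots> \<le> qq a n g w v * qq a n g w v ^ k"
    by (intro mult_left_mono Suc.IH qq_nonneg)
  finally show ?case by simp
qed


lemma key_ineq: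
  fixes D c :: real and m :: nat
  assumes D: "D \<ge> 1" and c: "c > 0" and mc: "2 * m \<le> c"
  shows "(1 - 1/D) ^ m \<le> 1 - (1 - 2*m/c) * m * (2/c - D/c^2)"
proof -
  define y where "y = m / D"
  define T where "T = 2 * m / c"
  define l where "l = m * (2/c - D/c^2)"
  have y0: "y \<ge> 0" using D by (simp add: y_def)
  have T01: "0 \<le> T" "T \<le> 1" using c mc by (auto simp: T_def)
  have ly: "l \<le> y"
  proof -
    have "y - l = m * (c - D)^2 / (D * c^2)"
      using D c by (simp add: y_def l_def field_simps power2_eq_square)
    also have "\<dots> \<ge> 0" using D c by (intro divide_nonneg_pos) auto
    finally show ?thesis by simp
  qed
  have lT: "l \<le> T"
  proof -
    have "m * (D / c^2) \<ge> 0" using D c by simp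
    moreover have "l = 2*m/c - m*(D/c^2)" by (simp add: l_def right_diff_distrib)
    ultimately show ?thesis by (simp add: T_def)
  qed
  have "(1 - 1/D) ^ m \<le> exp (- (1/D)) ^ m"
  proof (rule power_mono)
    show "1 - 1/D \<le> exp (- (1/D))" using exp_ge_add_one_self[of "-(1/D)"] by simp
    show "0 \<le> 1 - 1/D" using D by simp
  qed
  also have "\<dots> = exp (- y)" by (simp add: y_def exp_of_nat_mult[symmetric])
  also have "exp (- y) \<le> 1 - (1 - T) * l"
  proof (cases "l \<le> 0")
    case True
    have "(1 - T) * l \<le> 0" using True T01 by (simp add: mult_nonneg_nonpos)
    moreover have "exp (-y) \<le> 1" using y0 by simp
    ultimately show ?thesis by linarith
  next
    case False
    have e: "exp (-z) \<le> 1 / (1 + z)" if "z \<ge> 0" for z :: real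
    proof -
      have "1 + z \<le> exp z" by (rule exp_ge_add_one_self)
      then have "1 / exp z \<le> 1 / (1 + z)" using that by (intro divide_left_mono) auto
      then show ?thesis by (simp add: exp_minus_inverse exp_minus field_simps)
    qed
    show ?thesis
    proof (cases "y \<le> T")
      case True
      have "exp (-y) \<le> 1 / (1 + y)" using e y0 by simp
      also have "\<dots> = 1 - y / (1 + y)" using y0 by (simp add: field_simps)
      also have "y / (1 + y) \<ge> y * (1 - T)"
      proof -
        have "y * (1 - T) * (1 + y) \<le> y" 
        proof -
          have "(1 - T) * (1 + y) \<le> (1 - T) * (1 + T)" using True T01
            by (intro mult_left_mono) auto
          also have "\<dots> = 1 - T^2" by (simp add: algebra_simps power2_eq_square)
          finally have "(1 - T) * (1 + y) \<le> 1 - T^2" .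
          moreover have "T^2 \<ge> 0" by simp
          ultimately have "(1 - T) * (1 + y) \<le> 1" by linarith
          then show ?thesis using y0 by (metis mult.assoc mult_left_mono mult.right_neutral)
        qed
        then show ?thesis using y0 by (simp add: field_simps)
      qed
      then have "1 - y / (1 + y) \<le> 1 - y * (1 - T)" by simp
      also have "y * (1 - T) \<ge> (1 - T) * l" using ly T01 by (metis diff_ge_0_iff_ge mult.commute mult_right_mono)
      then have "1 - y * (1 - T) \<le> 1 - (1 - T) * l" by simp
      finally show ?thesis .
    next
      case False
      have "exp (-y) \<le> exp (-T)" using False by simp
      also have "\<dots> \<le> 1 / (1 + T)" using e T01 by simp
      also have "\<dots> = 1 - T / (1 + T)" using T01 by (simp add: field_simps)
      also have "T / (1 + T) \<ge> T * (1 - T)"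
      proof -
        have "T * (1 - T) * (1 + T) = T - T * T^2" by (simp add: algebra_simps power2_eq_square)
        moreover have "T * T^2 \<ge> 0" using T01 by simp
        ultimately have "T * (1 - T) * (1 + T) \<le> T" by linarith
        then show ?thesis using T01 by (simp add: field_simps)
      qed
      then have "1 - T / (1 + T) \<le> 1 - T * (1 - T)" by simp
      also have "T * (1 - T) \<ge> (1 - T) * l" using lT T01 by (metis diff_ge_0_iff_ge mult.commute mult_right_mono)
      then have "1 - T * (1 - T) \<le> 1 - (1 - T) * l" by simp
      finally show ?thesis .
    qed
  qed
  finally show ?thesis by (simp add: T_def l_def mult.assoc)
qed


definition Edom :: "nat \<Rightarrow> (nat \<times> nat) set" where
  "Edom n = {(u,v). u < n \<and> v < n \<and> u \<noteq> v}"

lemma finite_Edom[simp]: "finite (Edom n)"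
  by (rule finite_subset[of _ "{..<n} \<times> {..<n}"]) (auto simp: Edom_def)

lemma er_graph_Edom: "er_graph n p = Pi_pmf (Edom n) False (\<lambda>_. bernoulli_pmf p)"
  by (simp add: er_graph_def Edom_def)

lemma er_finite: "finite (set_pmf (er_graph n p))"
  unfolding er_graph_Edom by (rule finite_set_Pi_pmf) auto

lemma er_supp: "g \<in> set_pmf (er_graph n p) \<Longrightarrow> e \<notin> Edom n \<Longrightarrow> \<not> g e"
  unfolding er_graph_Edom using Pi_pmf_supp[OF finite_Edom, where f=g and x=e] by simp

lemma er_integrable[simp]: "integrable (measure_pmf (er_graph n p)) (f :: _ \<Rightarrow> real)"
  by (rule integrable_measure_pmf_finite[OF er_finite])

lemma expectation_bernoulli_of_bool:
  assumes "0 \<le> p" "p \<le> 1"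
  shows "measure_pmf.expectation (bernoulli_pmf p) (\<lambda>y. of_bool y :: real) = p"
  using assms by (subst integral_measure_pmf[of UNIV]) (auto simp: UNIV_bool)

lemma er_prod:
  assumes "T \<subseteq> Edom n" "0 \<le> p" "p \<le> 1"
  shows "measure_pmf.expectation (er_graph n p) (\<lambda>g. \<Prod>e\<in>T. of_bool (g e) :: real) = p ^ card T"
proof -
  define f where "f = (\<lambda>e (y::bool). if e \<in> T then of_bool y else (1::real))"
  have fin: "finite T" using finite_subset[OF assms(1) finite_Edom] .
  have eq: "(\<Prod>e\<in>T. of_bool (g e) :: real) = (\<Prod>e\<in>Edom n. f e (g e))" for g
  proof -
    have "(\<Prod>e\<in>Edom n. f e (g e)) = (\<Prod>e\<in>T. f e (g e))"
      by (rule prod.mono_neutral_right) (use assms(1) in \<open>auto simp: f_def\<close>)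
    then show ?thesis by (simp add: f_def)
  qed
  have "measure_pmf.expectation (er_graph n p) (\<lambda>g. \<Prod>e\<in>T. of_bool (g e) :: real)
      = measure_pmf.expectation (Pi_pmf (Edom n) False (\<lambda>_. bernoulli_pmf p)) (\<lambda>g. \<Prod>e\<in>Edom n. f e (g e))"
    by (simp add: er_graph_Edom eq)
  also have "\<dots> = (\<Prod>e\<in>Edom n. measure_pmf.expectation (bernoulli_pmf p) (f e))"
    by (rule expectation_prod_Pi_pmf)
       (auto simp: f_def intro!: integrable_measure_pmf_finite)
  also have "\<dots> = (\<Prod>e\<in>Edom n. if e \<in> T then p else 1)"
    by (intro prod.cong refl) (auto simp: f_def expectation_bernoulli_of_bool assms)
  also have "\<dots> = (\<Prod>e\<in>T. p)"
    by (subst prod.If_cases) (use assms(1) in \<open>auto simp: Int_absorb1 Int_absorb2\<close>)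
  also have "\<dots> = p ^ card T" by simp
  finally show ?thesis .
qed


definition cA :: "algo \<Rightarrow> nat \<Rightarrow> real \<Rightarrow> real" where
  "cA a n p = (case a of R1 \<Rightarrow> 1 + real (n - 2) * p | R2 \<Rightarrow> real n)"

lemma E_X:
  assumes "0 \<le> p" "p \<le> 1" "w < n" "v < n" "w \<noteq> v" "u \<in> Uset n w v"
  shows "measure_pmf.expectation (er_graph n p) (\<lambda>g. of_bool (g (w,u)) * of_bool (g (u,v)) :: real) = p^2"
proof -
  have d: "(w,u) \<noteq> (u,v)" using assms by (auto simp: Uset_def)
  have T: "{(w,u),(u,v)} \<subseteq> Edom n" using assms by (auto simp: Uset_def Edom_def)
  have "measure_pmf.expectation (er_graph n p) (\<lambda>g. \<Prod>e\<in>{(w,u),(u,v)}. of_bool (g e) :: real) = p ^ card {(w,u),(u,v)}"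
    by (rule er_prod[OF T assms(1,2)])
  then show ?thesis using d by (simp add: power2_eq_square)
qed

lemma E_X3:
  assumes "0 \<le> p" "p \<le> 1" "w < n" "v < n" "w \<noteq> v" "u \<in> Uset n w v" "x < n" "x \<noteq> u" "x \<noteq> w"
  shows "measure_pmf.expectation (er_graph n p)
     (\<lambda>g. of_bool (g (w,u)) * of_bool (g (u,v)) * of_bool (g (x,u)) :: real) = p^3"
proof -
  have d: "(w,u) \<noteq> (u,v)" "(w,u) \<noteq> (x,u)" "(u,v) \<noteq> (x,u)" using assms by (auto simp: Uset_def)
  have T: "{(w,u),(u,v),(x,u)} \<subseteq> Edom n" using assms by (auto simp: Uset_def Edom_def)
  have "measure_pmf.expectation (er_graph n p) (\<lambda>g. \<Prod>e\<in>{(w,u),(u,v),(x,u)}. of_bool (g e) :: real)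
      = p ^ card {(w,u),(u,v),(x,u)}"
    by (rule er_prod[OF T assms(1,2)])
  then show ?thesis using d by (simp add: mult.assoc power3_eq_cube)
qed

lemma E_XD_R1:
  assumes "0 \<le> p" "p \<le> 1" "w < n" "v < n" "w \<noteq> v" "u \<in> Uset n w v"
  shows "measure_pmf.expectation (er_graph n p)
     (\<lambda>g. of_bool (g (w,u)) * of_bool (g (u,v)) * (\<Sum>x\<in>{..<n}-{u}. of_bool (g (x,u))) :: real)
     = p^2 * (1 + real (n - 2) * p)"
proof -
  let ?X = "\<lambda>g. of_bool (g (w,u)) * of_bool (g (u,v)) :: real"
  have wU: "w \<in> {..<n}-{u}" using assms by (auto simp: Uset_def)
  have split: "{..<n}-{u} = insert w ({..<n}-{u,w})" using wU by auto
  have "(\<lambda>g. ?X g * (\<Sum>x\<in>{..<n}-{u}. of_bool (g (x,u)))) =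
        (\<lambda>g. ?X g + (\<Sum>x\<in>{..<n}-{u,w}. ?X g * of_bool (g (x,u))))"
    by (auto simp: split sum_distrib_left simp del: sum_of_bool_eq sum_mult_of_bool_eq sum_of_bool_mult_eq)
  then have "measure_pmf.expectation (er_graph n p) (\<lambda>g. ?X g * (\<Sum>x\<in>{..<n}-{u}. of_bool (g (x,u))))
      = measure_pmf.expectation (er_graph n p) ?X +
        (\<Sum>x\<in>{..<n}-{u,w}. measure_pmf.expectation (er_graph n p) (\<lambda>g. ?X g * of_bool (g (x,u))))"
    by (simp add: Bochner_Integration.integral_add Bochner_Integration.integral_sum
             del: sum_of_bool_eq sum_mult_of_bool_eq sum_of_bool_mult_eq)
  also have "\<dots> = p^2 + (\<Sum>x\<in>{..<n}-{u,w}. p^3)"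
    using E_X[OF assms] E_X3[OF assms] by (intro arg_cong2[where f="(+)"] sum.cong) auto
  also have "card ({..<n}-{u,w}) = n - 2"
    using assms by (subst card_Diff_subset) (auto simp: Uset_def)
  then have "(\<Sum>x\<in>{..<n}-{u,w}. p^3) = real (n-2) * p^3" by simp
  finally show ?thesis by (simp add: algebra_simps power2_eq_square power3_eq_cube)
qed

lemma fr_pow_bound:
  assumes p: "0 < p" "p < 1" and wv: "w < n" "v < n" "w \<noteq> v" and u: "u \<in> Uset n w v"
    and c: "c = cA a n p" and mc: "2 * m \<le> c"
  shows "measure_pmf.expectation (er_graph n p) (\<lambda>g. fr a n g w v u ^ m)
           \<le> 1 - p^2 * ((1 - 2*m/c) * m / c)"
proof -
  have n3: "n \<ge> 3"
  proof -
    have "{w,v,u} \<subseteq> {..<n}" using wv u by (auto simp: Uset_def)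
    then have "card {w,v,u} \<le> n" using card_mono[of "{..<n}" "{w,v,u}"] by simp
    moreover have "card {w,v,u} = 3" using wv u by (auto simp: Uset_def)
    ultimately show ?thesis by simp
  qed
  have cpos: "c > 0"
  proof (cases a)
    case R1
    have "real (n - 2) * p \<ge> 0" using p by simp
    then show ?thesis using c R1 by (simp add: cA_def)
  next
    case R2 then show ?thesis using c n3 by (simp add: cA_def)
  qed
  define X where "X = (\<lambda>g. of_bool (g (w,u)) * of_bool (g (u,v)) :: real)"
  define Dg where "Dg = (\<lambda>g. case a of R1 \<Rightarrow> (\<Sum>x\<in>{..<n}-{u}. of_bool (g (x,u))) | R2 \<Rightarrow> real n)"
  define \<alpha> where "\<alpha> = (1 - 2*m/c) * m * (2/c)"
  define \<beta> where "\<beta> = (1 - 2*m/c) * m / c^2"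
  have pw: "fr a n g w v u ^ m \<le> 1 - \<alpha> * X g + \<beta> * (X g * Dg g)"
    if g: "g \<in> set_pmf (er_graph n p)" for g
  proof (cases "g (w,u) \<and> g (u,v)")
    case False
    then show ?thesis by (auto simp: fr_def X_def)
  next
    case True
    have X1: "X g = 1" using True by (simp add: X_def)
    have cuD: "cu a n g u = Dg g"
    proof (cases a)
      case R1
      have "(({..<n}-{u}) \<inter> {x. g (x,u)}) = round1_recv n g u"
        using er_supp[OF g, of "(u,u)"] by (auto simp: round1_recv_def Edom_def)
      then show ?thesis using R1 by (simp add: cu_def Dg_def)
    next
      case R2 then show ?thesis by (simp add: cu_def Dg_def)
    qed
    have D1: "Dg g \<ge> 1"
    proof (cases a)
      case R1
      have "w \<in> round1_recv n g u" using True wv by (simp add: round1_recv_def)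
      then have "card (round1_recv n g u) \<ge> 1"
        using finite_subset[OF round1_sub finite_lessThan] card_gt_0_iff
        by (metis One_nat_def Suc_leI empty_iff)
      then show ?thesis using cuD R1 by (simp add: cu_def)
    next
      case R2 then show ?thesis using n3 by (simp add: Dg_def)
    qed
    have "fr a n g w v u ^ m = (1 - 1 / Dg g) ^ m" using True cuD by (simp add: fr_def)
    also have "\<dots> \<le> 1 - (1 - 2*m/c) * m * (2/c - Dg g/c^2)"
      by (rule key_ineq[OF D1 cpos mc])
    also have "\<dots> = 1 - \<alpha> * X g + \<beta> * (X g * Dg g)"
      using X1 cpos by (simp add: \<alpha>_def \<beta>_def field_simps power2_eq_square)
    finally show ?thesis .
  qed
  have "measure_pmf.expectation (er_graph n p) (\<lambda>g. fr a n g w v u ^ m)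
      \<le> measure_pmf.expectation (er_graph n p) (\<lambda>g. 1 - \<alpha> * X g + \<beta> * (X g * Dg g))"
    by (intro integral_mono_AE AE_pmfI pw) simp_all
  also have "\<dots> = 1 - \<alpha> * measure_pmf.expectation (er_graph n p) X
                    + \<beta> * measure_pmf.expectation (er_graph n p) (\<lambda>g. X g * Dg g)"
    by simp
  also have "measure_pmf.expectation (er_graph n p) X = p^2"
    unfolding X_def by (rule E_X) (use p wv u in auto)
  also have "measure_pmf.expectation (er_graph n p) (\<lambda>g. X g * Dg g) = p^2 * c"
  proof (cases a)
    case R1
    then show ?thesis unfolding X_def Dg_def c cA_def
      using E_XD_R1[of p w n v u] p wv u by simp
  next
    case R2
    have "measure_pmf.expectation (er_graph n p) (\<lambda>g. X g * Dg g) =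
          measure_pmf.expectation (er_graph n p) X * real n"
      using R2 by (simp add: Dg_def)
    also have "measure_pmf.expectation (er_graph n p) X = p^2"
      unfolding X_def by (rule E_X) (use p wv u in auto)
    finally show ?thesis using R2 c by (simp add: cA_def)
  qed
  also have "1 - \<alpha> * p^2 + \<beta> * (p^2 * c) = 1 - p^2 * ((1 - 2*m/c) * m / c)"
    using cpos by (simp add: \<alpha>_def \<beta>_def field_simps power2_eq_square)
  finally show ?thesis by simp
qed


lemma pair_bound:
  assumes p: "0 < p" "p < 1" and wv: "w < n" "v < n" "w \<noteq> v"
    and c: "c = cA a n p" and mc: "2 * m \<le> c"
  shows "measure_pmf.expectation (er_graph n p) (\<lambda>g. qq a n g w v ^ m)
           \<le> exp (- (real (n - 2) * (p^2 * ((1 - 2*m/c) * m / c))))"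
proof -
  define S where "S = (\<lambda>u. {e. snd e = u} \<union> {(u,v)})"
  have "measure_pmf.expectation (er_graph n p) (\<lambda>g. qq a n g w v ^ m)
      = measure_pmf.expectation (Pi_pmf (Edom n) False (\<lambda>_. bernoulli_pmf p))
          (\<lambda>g. \<Prod>u\<in>Uset n w v. fr a n g w v u ^ m)"
    by (simp add: er_graph_Edom qq_def prod_power_distrib)
  also have "\<dots> = (\<Prod>u\<in>Uset n w v. measure_pmf.expectation (Pi_pmf (Edom n) False (\<lambda>_. bernoulli_pmf p))
          (\<lambda>g. fr a n g w v u ^ m))"
  proof (rule Pi_pmf_factor)
    show "finite (set_pmf (bernoulli_pmf p))" for x :: "nat \<times> nat" by simp
    show "disjoint_family_on S (Uset n w v)"
      by (auto simp: disjoint_family_on_def S_def Uset_def)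
    show "fr a n g w v u ^ m = fr a n g' w v u ^ m"
      if "u \<in> Uset n w v" "\<forall>e\<in>S u. g e = g' e" for u g g'
    proof -
      have r: "round1_recv n g u = round1_recv n g' u"
        using that(2) by (auto simp: round1_recv_def S_def)
      have "g (w,u) = g' (w,u)" "g (u,v) = g' (u,v)" using that(2) by (auto simp: S_def)
      moreover have "cu a n g u = cu a n g' u" unfolding cu_def r ..
      ultimately show ?thesis unfolding fr_def by simp
    qed
  qed simp_all
  also have "\<dots> \<le> (\<Prod>u\<in>Uset n w v. exp (- (p^2 * ((1 - 2*m/c) * m / c))))"
  proof (rule prod_mono, rule conjI)
    fix u assume u: "u \<in> Uset n w v"
    show "0 \<le> measure_pmf.expectation (Pi_pmf (Edom n) False (\<lambda>_. bernoulli_pmf p)) (\<lambda>g. fr a n g w v u ^ m)"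
      by (intro Bochner_Integration.integral_nonneg zero_le_power fr_nonneg)
    have "measure_pmf.expectation (Pi_pmf (Edom n) False (\<lambda>_. bernoulli_pmf p)) (\<lambda>g. fr a n g w v u ^ m)
        \<le> 1 - p^2 * ((1 - 2*m/c) * m / c)"
      using fr_pow_bound[OF p wv u c mc] by (simp add: er_graph_Edom)
    also have "\<dots> \<le> exp (- (p^2 * ((1 - 2*m/c) * m / c)))"
      using exp_ge_add_one_self[of "- (p^2 * ((1 - 2*m/c) * m / c))"] by simp
    finally show "measure_pmf.expectation (Pi_pmf (Edom n) False (\<lambda>_. bernoulli_pmf p)) (\<lambda>g. fr a n g w v u ^ m)
        \<le> exp (- (p^2 * ((1 - 2*m/c) * m / c)))" .
  qed
  also have "\<dots> = exp (- (real (card (Uset n w v)) * (p^2 * ((1 - 2*m/c) * m / c))))"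
    by (simp add: exp_of_nat_mult[symmetric])
  also have "card (Uset n w v) = n - 2"
  proof -
    have "Uset n w v = {..<n} - {w,v}" by (auto simp: Uset_def)
    then show ?thesis using wv by (simp add: card_Diff_subset)
  qed
  finally show ?thesis by simp
qed

definition Fset :: "nat \<Rightarrow> real \<Rightarrow> (nat \<Rightarrow> nat set) list set" where
  "Fset n x = {h. \<not> (\<exists>k. real k \<le> x \<and> k < length h \<and> all_done n (h ! k))}"

lemma fail_g:
  assumes K: "nat \<lfloor>x\<rfloor> = Suc m"
  shows "measure_pmf.prob (history a n g (nat \<lfloor>x\<rfloor>)) (Fset n x)
         \<le> (\<Sum>e\<in>Edom n. qq a n g (fst e) (snd e) ^ m)"
proof -
  let ?M = "history a n g (Suc m)"
  have xK: "real (Suc m) \<le> x"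
  proof -
    have "real (nat \<lfloor>x\<rfloor>) \<le> x" using K by linarith
    then show ?thesis using K by simp
  qed
  have sub: "Fset n x \<inter> set_pmf ?M \<subseteq> (\<Union>e\<in>Edom n. {h. fst e \<notin> last h (snd e)})"
  proof
    fix h assume h: "h \<in> Fset n x \<inter> set_pmf ?M"
    have len: "length h = m + 2" using history_set[of h a n g m] h by simp
    have ne: "h \<noteq> []" using len by auto
    have lst: "h ! Suc m = last h" using len ne by (simp add: last_conv_nth)
    have "\<not> all_done n (h ! Suc m)" using h xK len unfolding Fset_def by auto
    then obtain v u where "v < n" "u < n" "u \<noteq> v" "u \<notin> last h v"
      unfolding all_done_def lst by auto
    then show "h \<in> (\<Union>e\<in>Edom n. {h. fst e \<notin> last h (snd e)})"
      by (auto simp: Edom_def intro!: bexI[of _ "(u,v)"])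
  qed
  have "measure_pmf.prob ?M (Fset n x) = measure_pmf.prob ?M (Fset n x \<inter> set_pmf ?M)"
    by (simp add: measure_Int_set_pmf)
  also have "\<dots> \<le> measure_pmf.prob ?M (\<Union>e\<in>Edom n. {h. fst e \<notin> last h (snd e)})"
    by (rule measure_pmf.finite_measure_mono[OF sub]) simp
  also have "\<dots> \<le> (\<Sum>e\<in>Edom n. measure_pmf.prob ?M {h. fst e \<notin> last h (snd e)})"
    by (rule measure_UNION_le) auto
  also have "\<dots> \<le> (\<Sum>e\<in>Edom n. qq a n g (fst e) (snd e) ^ m)"
  proof (rule sum_mono)
    fix e assume "e \<in> Edom n"
    then show "measure_pmf.prob ?M {h. fst e \<notin> last h (snd e)} \<le> qq a n g (fst e) (snd e) ^ m"
      by (intro hist_bound) (auto simp: Edom_def)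
  qed
  finally show ?thesis using K by simp
qed

lemma card_Edom: "card (Edom n) \<le> n^2"
proof -
  have "card (Edom n) \<le> card ({..<n} \<times> {..<n})"
    by (rule card_mono) (auto simp: Edom_def)
  then show ?thesis by (simp add: power2_eq_square)
qed

lemma probT_bound:
  assumes K: "nat \<lfloor>x\<rfloor> = Suc m" and p: "0 < p" "p < 1"
    and c: "c = cA a n p" and mc: "2 * m \<le> c"
  shows "prob_T_gt a n p x \<le> real n ^ 2 * exp (- (real (n - 2) * (p^2 * ((1 - 2 * real m / c) * real m / c))))"
proof -
  let ?B = "exp (- (real (n - 2) * (p^2 * ((1 - 2 * real m / c) * real m / c))))"
  have "prob_T_gt a n p x = measure_pmf.expectation (er_graph n p)
          (\<lambda>g. measure_pmf.prob (history a n g (nat \<lfloor>x\<rfloor>)) (Fset n x))"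
    unfolding prob_T_gt_def Fset_def by (rule measure_bind_pmf_real)
  also have "\<dots> \<le> measure_pmf.expectation (er_graph n p)
          (\<lambda>g. \<Sum>e\<in>Edom n. qq a n g (fst e) (snd e) ^ m)"
    by (intro integral_mono_AE AE_pmfI fail_g[OF K]) simp_all
  also have "\<dots> = (\<Sum>e\<in>Edom n. measure_pmf.expectation (er_graph n p) (\<lambda>g. qq a n g (fst e) (snd e) ^ m))"
    by (rule Bochner_Integration.integral_sum) simp
  also have "\<dots> \<le> (\<Sum>e\<in>Edom n. ?B)"
  proof (rule sum_mono)
    fix e assume "e \<in> Edom n"
    then show "measure_pmf.expectation (er_graph n p) (\<lambda>g. qq a n g (fst e) (snd e) ^ m) \<le> ?B"
      using pair_bound[where w="fst e" and v="snd e" and n=n, OF p _ _ _ c mc] by (auto simp: Edom_def)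
  qed
  also have "\<dots> = real (card (Edom n)) * ?B" by simp
  also have "\<dots> \<le> real n ^ 2 * ?B"
    using card_Edom[of n] by (intro mult_right_mono) (simp_all add: of_nat_le_iff[symmetric] del: of_nat_le_iff)
  finally show ?thesis .
qed


lemma ln_seq_top: "filterlim (\<lambda>n::nat. ln (real n)) at_top sequentially"
  by (rule filterlim_compose[OF ln_at_top filterlim_real_sequentially])

lemma asym_main:
  fixes c r :: "nat \<Rightarrow> real"
  assumes \<rho>: "\<rho> > 0" and \<epsilon>: "\<epsilon> > 0"
    and r: "r \<longlonglongrightarrow> \<rho>" and lc: "(\<lambda>n. ln (real n) / c n) \<longlonglongrightarrow> 0"
  shows "(\<lambda>n. real n ^ 2 * exp (- (r n * (1 - 2 * (2*(1+\<epsilon>)/\<rho> * ln (real n)) / c n)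
                                   * (2*(1+\<epsilon>)/\<rho> * ln (real n) - 2)))) \<longlonglongrightarrow> 0"
proof -
  define \<kappa> where "\<kappa> = 2*(1+\<epsilon>)/\<rho>"
  define \<Phi> where "\<Phi> = (\<lambda>n. r n * (1 - 2 * (\<kappa> * ln (real n)) / c n) * (\<kappa> * ln (real n) - 2))"
  have lnt: "filterlim (\<lambda>n::nat. ln (real n)) at_top sequentially" by (rule ln_seq_top)
  have inv0: "(\<lambda>n. 2 / ln (real n)) \<longlonglongrightarrow> 0"
    by (rule tendsto_divide_0[OF tendsto_const]) (rule filterlim_at_top_imp_at_infinity[OF lnt])
  have lim1: "(\<lambda>n. r n * (1 - 2 * \<kappa> * (ln (real n) / c n)) * (\<kappa> - 2 / ln (real n))) \<longlonglongrightarrow> \<rho> * \<kappa>"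
  proof -
    have "(\<lambda>n. r n * (1 - 2 * \<kappa> * (ln (real n) / c n)) * (\<kappa> - 2 / ln (real n))) \<longlonglongrightarrow> \<rho> * (1 - 2 * \<kappa> * 0) * (\<kappa> - 0)"
      by (intro tendsto_intros r lc inv0)
    then show ?thesis by simp
  qed
  have ev_ln: "eventually (\<lambda>n. ln (real n) > 0) sequentially"
    using lnt by (simp add: filterlim_at_top_dense)
  have "(\<lambda>n. \<Phi> n / ln (real n)) \<longlonglongrightarrow> \<rho> * \<kappa>"
  proof (rule Lim_transform_eventually[OF lim1])
    show "eventually (\<lambda>n. r n * (1 - 2 * \<kappa> * (ln (real n) / c n)) * (\<kappa> - 2 / ln (real n)) = \<Phi> n / ln (real n)) sequentially"
      using ev_ln by eventually_elim (simp add: \<Phi>_def field_simps)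
  qed
  moreover have "\<rho> * \<kappa> = 2 * (1 + \<epsilon>)" using \<rho> by (simp add: \<kappa>_def)
  ultimately have "(\<lambda>n. \<Phi> n / ln (real n)) \<longlonglongrightarrow> 2 * (1 + \<epsilon>)" by simp
  moreover have "2 + \<epsilon> < 2 * (1 + \<epsilon>)" using \<epsilon> by simp
  ultimately have ev1: "eventually (\<lambda>n. \<Phi> n / ln (real n) > 2 + \<epsilon>) sequentially"
    by (rule order_tendstoD)
  have ev2: "eventually (\<lambda>n. real n ^ 2 * exp (- \<Phi> n) \<le> exp (- (\<epsilon> * ln (real n)))) sequentially"
    using ev1 ev_ln eventually_gt_at_top[of 0]
  proof eventually_elim
    case (elim n)
    have "\<Phi> n > (2 + \<epsilon>) * ln (real n)" using elim by (simp add: field_simps)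
    then have "exp (- \<Phi> n) \<le> exp (- ((2 + \<epsilon>) * ln (real n)))" by simp
    then have "real n ^ 2 * exp (- \<Phi> n) \<le> real n ^ 2 * exp (- ((2 + \<epsilon>) * ln (real n)))"
      by (intro mult_left_mono) auto
    moreover have "real n ^ 2 = exp (2 * ln (real n))"
      using elim by (subst exp_double) simp
    moreover have "exp (2 * ln (real n)) * exp (- ((2 + \<epsilon>) * ln (real n))) = exp (- (\<epsilon> * ln (real n)))"
      by (simp add: exp_add[symmetric] algebra_simps)
    ultimately show ?case by simp
  qed
  have lim0: "(\<lambda>n. exp (- (\<epsilon> * ln (real n)))) \<longlonglongrightarrow> 0"
  proof -
    have "filterlim (\<lambda>n. \<epsilon> * ln (real n)) at_top sequentially"
      using lnt \<epsilon> by (simp add: filterlim_tendsto_pos_mult_at_top[OF tendsto_const])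
    then have "filterlim (\<lambda>n. - (\<epsilon> * ln (real n))) at_bot sequentially"
      by (simp add: filterlim_uminus_at_top)
    then show ?thesis by (rule filterlim_compose[OF exp_at_bot])
  qed
  have "(\<lambda>n. real n ^ 2 * exp (- \<Phi> n)) \<longlonglongrightarrow> 0"
    by (rule tendsto_sandwich[OF _ ev2 tendsto_const lim0]) simp
  then show ?thesis by (simp add: \<Phi>_def \<kappa>_def)
qed


lemma alg_limit:
  assumes p: "0 < p" "p < 1" and \<epsilon>: "\<epsilon> > 0" and \<rho>: "\<rho> > 0"
    and r: "(\<lambda>n. real (n - 2) * p^2 / cA a n p) \<longlonglongrightarrow> \<rho>"
    and lc: "(\<lambda>n. ln (real n) / cA a n p) \<longlonglongrightarrow> 0"
    and cpos: "eventually (\<lambda>n. cA a n p > 0) sequentially"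
  shows "(\<lambda>n. prob_T_gt a n p (2 * (1 + \<epsilon>) / \<rho> * ln (real n))) \<longlonglongrightarrow> 0"
proof -
  define \<kappa> where "\<kappa> = 2 * (1 + \<epsilon>) / \<rho>"
  have \<kappa>: "\<kappa> > 0" using \<epsilon> \<rho> by (simp add: \<kappa>_def)
  define x where "x = (\<lambda>n::nat. \<kappa> * ln (real n))"
  define c where "c = (\<lambda>n. cA a n p)"
  define r where "r = (\<lambda>n. real (n - 2) * p^2 / c n)"
  define B where "B = (\<lambda>n. real n ^ 2 * exp (- (r n * (1 - 2 * x n / c n) * (x n - 2))))"
  have B0: "B \<longlonglongrightarrow> 0"
    unfolding B_def r_def c_def x_def \<kappa>_def using asym_main[OF \<rho> \<epsilon> r lc] by simp
  have ev_x: "eventually (\<lambda>n. x n \<ge> 2) sequentially"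
  proof -
    have "filterlim x at_top sequentially"
      unfolding x_def using ln_seq_top \<kappa> by (simp add: filterlim_tendsto_pos_mult_at_top[OF tendsto_const])
    then show ?thesis by (simp add: filterlim_at_top)
  qed
  have ev_xc: "eventually (\<lambda>n. x n / c n \<le> 1/2) sequentially"
  proof -
    have "(\<lambda>n. \<kappa> * (ln (real n) / c n)) \<longlonglongrightarrow> \<kappa> * 0"
      using lc unfolding c_def by (intro tendsto_intros)
    then have "(\<lambda>n. x n / c n) \<longlonglongrightarrow> 0" by (simp add: x_def)
    from order_tendstoD(2)[OF this, of "1/2"] show ?thesis
      by (auto elim: eventually_mono)
  qed
  have ev: "eventually (\<lambda>n. prob_T_gt a n p (x n) \<le> B n) sequentially"
    using ev_x ev_xc cpos eventually_ge_at_top[of 2] unfolding c_def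
  proof eventually_elim
    case (elim n)
    have cn: "c n > 0" using elim by (simp add: c_def)
    have x2c: "2 * x n \<le> c n" using elim cn by (simp add: field_simps c_def)
    define m where "m = nat \<lfloor>x n\<rfloor> - 1"
    have fl: "\<lfloor>x n\<rfloor> \<ge> 2" using elim by linarith
    have K: "nat \<lfloor>x n\<rfloor> = Suc m" using fl by (simp add: m_def)
    have k1: "nat \<lfloor>x n\<rfloor> \<ge> 1" using fl by linarith
    have kk: "real (nat \<lfloor>x n\<rfloor>) = real_of_int \<lfloor>x n\<rfloor>" using fl by simp
    have rm: "real m = real_of_int \<lfloor>x n\<rfloor> - 1" unfolding m_def using kk k1 by (simp add: of_nat_diff)
    have mx: "real m \<le> x n" "x n - 2 \<le> real m"
      using rm by linarith+
    have mc: "2 * real m \<le> c n" using mx x2c by simp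
    have "prob_T_gt a n p (x n) \<le> real n ^ 2 * exp (- (real (n - 2) * (p^2 * ((1 - 2 * real m / c n) * real m / c n))))"
      by (rule probT_bound[OF K p]) (use mc in \<open>simp_all add: c_def\<close>)
    also have "\<dots> \<le> B n"
      unfolding B_def
    proof (intro mult_left_mono, subst exp_le_cancel_iff, intro le_imp_neg_le)
      have "r n * (1 - 2 * x n / c n) * (x n - 2) \<le> r n * (1 - 2 * real m / c n) * real m"
      proof (intro mult_mono mult_left_mono)
        show "0 \<le> r n" using cn by (simp add: r_def)
        show "1 - 2 * x n / c n \<le> 1 - 2 * real m / c n" using mx cn by (simp add: divide_right_mono)
        show "x n - 2 \<le> real m" using mx by simp
        show "0 \<le> x n - 2" using elim by simp
        show "r n \<le> r n" by simp
        show "0 \<le> 1 - 2 * x n / c n" using cn x2c by (simp add: field_simps)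
        have "0 \<le> 1 - 2 * real m / c n" using cn mc by (simp add: field_simps)
        then show "0 \<le> r n * (1 - 2 * real m / c n)"
          using \<open>0 \<le> r n\<close> by simp
      qed
      also have "\<dots> = real (n - 2) * (p^2 * ((1 - 2 * real m / c n) * real m / c n))"
        using cn by (simp add: r_def field_simps)
      finally show "r n * (1 - 2 * x n / c n) * (x n - 2) \<le> real (n - 2) * (p^2 * ((1 - 2 * real m / c n) * real m / c n))" .
    qed simp
    finally show ?case .
  qed
  have nn: "eventually (\<lambda>n. 0 \<le> prob_T_gt a n p (x n)) sequentially"
    by (simp add: prob_T_gt_def)
  have "(\<lambda>n. prob_T_gt a n p (x n)) \<longlonglongrightarrow> 0"
    by (rule tendsto_sandwich[OF nn ev tendsto_const B0])
  then show ?thesis by (simp add: x_def \<kappa>_def)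
qed

lemma R1_r:
  assumes p: "0 < p"
  shows "(\<lambda>n. real (n - 2) * p^2 / cA R1 n p) \<longlonglongrightarrow> p"
proof -
  have st: "filterlim (\<lambda>n::nat. real (n - 2)) at_top sequentially"
    by (rule filterlim_compose[OF filterlim_real_sequentially filterlim_minus_const_nat_at_top])
  have "(\<lambda>n. p^2 / (inverse (real (n - 2)) + p)) \<longlonglongrightarrow> p^2 / (0 + p)"
    by (intro tendsto_intros tendsto_inverse_0_at_top[OF st]) (use p in simp)
  then have l: "(\<lambda>n. p^2 / (inverse (real (n - 2)) + p)) \<longlonglongrightarrow> p"
    using p by (simp add: power2_eq_square)
  show ?thesis
  proof (rule Lim_transform_eventually[OF l])
    show "eventually (\<lambda>n. p^2 / (inverse (real (n - 2)) + p) = real (n - 2) * p^2 / cA R1 n p) sequentially"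
      using eventually_ge_at_top[of 3]
    proof eventually_elim
      case (elim n)
      then have "real (n - 2) > 0" by simp
      then show ?case using p by (simp add: cA_def field_simps)
    qed
  qed
qed

lemma R1_lc:
  assumes p: "0 < p"
  shows "(\<lambda>n. ln (real n) / cA R1 n p) \<longlonglongrightarrow> 0"
proof (rule tendsto_sandwich[OF _ _ tendsto_const])
  show "(\<lambda>n. (2/p) * (ln (real n) / real n)) \<longlonglongrightarrow> 0"
    using tendsto_mult[OF tendsto_const[of "2/p"] lim_ln_over_n] by simp
  show "eventually (\<lambda>n. 0 \<le> ln (real n) / cA R1 n p) sequentially"
    using eventually_ge_at_top[of 1]
    by eventually_elim (use p in \<open>auto simp: cA_def intro!: divide_nonneg_pos add_pos_nonneg\<close>)
  show "eventually (\<lambda>n. ln (real n) / cA R1 n p \<le> (2/p) * (ln (real n) / real n)) sequentially"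
    using eventually_ge_at_top[of 4]
  proof eventually_elim
    case (elim n)
    have ln0: "ln (real n) \<ge> 0" using elim by simp
    have r2: "real (n - 2) = real n - 2" using elim by (simp add: of_nat_diff)
    have den: "real n * p / 2 \<le> 1 + real (n - 2) * p"
    proof -
      have "real n * p / 2 \<le> (real n - 2) * p" using elim p by (simp add: field_simps)
      then show ?thesis using r2 by simp
    qed
    have pos: "0 < real n * p / 2" using elim p by simp
    have "ln (real n) / cA R1 n p \<le> ln (real n) / (real n * p / 2)"
      unfolding cA_def algo.case
    proof (rule divide_left_mono[OF den ln0])
      show "0 < (1 + real (n - 2) * p) * (real n * p / 2)"
        using pos den by (intro mult_pos_pos) linarith+
    qed
    also have "\<dots> = (2/p) * (ln (real n) / real n)" using p elim by (simp add: field_simps)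
    finally show ?case .
  qed
qed

lemma R2_r:
  shows "(\<lambda>n. real (n - 2) * p^2 / cA R2 n p) \<longlonglongrightarrow> p^2"
proof -
  have "(\<lambda>n. p^2 * (1 - 2 * (1 / real n))) \<longlonglongrightarrow> p^2 * (1 - 2 * 0)"
    by (intro tendsto_intros lim_inverse_n')
  then have l: "(\<lambda>n. p^2 * (1 - 2 * (1 / real n))) \<longlonglongrightarrow> p^2" by simp
  show ?thesis
  proof (rule Lim_transform_eventually[OF l])
    show "eventually (\<lambda>n. p^2 * (1 - 2 * (1 / real n)) = real (n - 2) * p^2 / cA R2 n p) sequentially"
      using eventually_ge_at_top[of 2]
    proof eventually_elim
      case (elim n)
      then show ?case by (simp add: cA_def of_nat_diff field_simps)
    qed
  qed
qed

theorem theorem1: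
  fixes p \<epsilon> :: real
  assumes "0 < p" "p < 1" "\<epsilon> > 0"
  shows "(\<lambda>n. prob_T_gt R1 n p (2 * (1 + \<epsilon>) / p * ln (real n))) \<longlonglongrightarrow> 0 \<and>
         (\<lambda>n. prob_T_gt R2 n p (2 * (1 + \<epsilon>) / p^2 * ln (real n))) \<longlonglongrightarrow> 0"
proof
  show "(\<lambda>n. prob_T_gt R1 n p (2 * (1 + \<epsilon>) / p * ln (real n))) \<longlonglongrightarrow> 0"
  proof (rule alg_limit[OF assms])
    show "0 < p" by fact
    show "(\<lambda>n. real (n - 2) * p^2 / cA R1 n p) \<longlonglongrightarrow> p" by (rule R1_r) fact
    show "(\<lambda>n. ln (real n) / cA R1 n p) \<longlonglongrightarrow> 0" by (rule R1_lc) fact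
    show "eventually (\<lambda>n. cA R1 n p > 0) sequentially"
      using assms by (auto simp: cA_def intro!: always_eventually add_pos_nonneg)
  qed
  show "(\<lambda>n. prob_T_gt R2 n p (2 * (1 + \<epsilon>) / p^2 * ln (real n))) \<longlonglongrightarrow> 0"
  proof (rule alg_limit[OF assms])
    show "0 < p^2" using assms by simp
    show "(\<lambda>n. real (n - 2) * p^2 / cA R2 n p) \<longlonglongrightarrow> p^2" by (rule R2_r)
    show "(\<lambda>n. ln (real n) / cA R2 n p) \<longlonglongrightarrow> 0" unfolding cA_def by (simp add: lim_ln_over_n)
    show "eventually (\<lambda>n. cA R2 n p > 0) sequentially"
      using eventually_ge_at_top[of 1] by eventually_elim (simp add: cA_def)
  qed
qed


end
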